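(* Let \(D\) be a tangle diagram and \(i \mapsto g_i,\ j \mapsto u_j\) be a decorated shadow \(\mathrm{SL}(2,\mathbb{C})\)-coloring of \(D\) (corresponding to the representation \(\rho\) with \(\rho(w_i)=g_i\)), with \(u_0\) the shadow of the topmost region. Let \(\chi\) be the associated octahedral coloring. Then its holonomy agrees with \(\rho\) in the sense that \[ \mathrm{hol}_{\chi, u_0}(w_i) = \rho(w_i) \] for each Wirtinger generator \(w_i\).
   Context: Setting. \(D\) is a diagram of an oriented tangle \(T\); \(\pi(D)\) is the Wirtinger presentation of the fundamental group of the complement, with one generator \(w_i\) per arc (each segment \(i\) has generator \(w_i\)) and relations \(w_{2'} = w_1^{-1} w_2 w_1\) at positive crossings and \(w_{1'} = w_2 w_1 w_2^{-1}\) at negative crossings. For a segment \(i\), \(\uparrow i\) denotes the region above it and \(\downarrow i\) the region below it (w.r.t. the orientation of the segment). Decorated shadow coloring: each segment \(i\) gets \(g_i \in \mathrm{SL}(2,\mathbb{C})\) satisfying the Wirtinger relations and a line \(L_i \subset \mathbb{C}^2\) of row vectors with \(L_i g_i = L_i\), with \(L_{2'} = L_2 g_1\) (positive crossing) and \(L_{1'} = L_1 g_2\) (negative crossing); each region \(j\) gets a nonzero column vector \(u_j\), with \(u_{j'} = g_i u_j\) when \(j'\) is below \(j\) across \(i\). Associated octahedral coloring: choose nonzero \(v_i \in L_i\) and let \(m_i\) satisfy \(v_i g_i = m_i^{-1} v_i\). Assuming admissibility (\(\det(u_j, e_2) \ne 0\) for all regions \(j\), and \(v_i e_2 \ne 0\),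 \(v_i u_{\uparrow i} \ne 0\) for all segments \(i\), where \(e_1,e_2\) are the standard column basis vectors), set \(\chi_i = (a_i,b_i,m_i) = \left( \frac{\det(u_{\downarrow i}, e_2)}{\det(u_{\uparrow i}, e_2)},\ -\frac{v_i e_2}{v_i u_{\uparrow i}},\ m_i\right)\). Holonomy. For an octahedral color \(\chi=(a,b,m)\) let \(\chi^{\uparrow} = \begin{bmatrix} a & 0 \\ (a-1/m)/b & 1\end{bmatrix}\), \(\chi^{\downarrow} = \begin{bmatrix} 1 & (a-m)b \\ 0 & a\end{bmatrix}\), and for a column vector \(u = (u^1,u^2)^{\mathrm T}\) let \(u^{\uparrow} = \begin{bmatrix} u^1 & 0 \\ u^2 & 1\end{bmatrix}\). The fundamental groupoid \(\Pi(D)\) has one object per region and generators \(x_i^{+}\), \(x_i^{-}\) for each segment \(i\) (paths from \(\uparrow i\) to \(\downarrow i\) passing over, respectively under, the segment). The holonomy functor \(\mathrm{Hol}_\chi : \Pi(D) \to \mathrm{GL}(2,\mathbb{C})\) sends \(x_i^+ \mapsto \chi_i^{\uparrow}\) and \(x_i^- \mapsto \chi_i^{\downarrow}\). For a region \(j\), \(s_j^+\) is the over path from the topmost region \(0\) to \(j\) (passing over every strand). The functor \(\mathcal{F}: \pi(D) \to \Pi(D)\) is \(\mathcal{F}(w_i) = s^+_{\uparrow i}\, x_i^+ (x_i^-)^{-1}\, (s^+_{\uparrow i})^{-1}\). Finally \(\mathrm{hol}_{\chi,u_0}(w_i) = u_0^{\uparrow}\, \mathrm{Hol}_\chi(\mathcal{F}(w_i))\,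 (u_0^{\uparrow})^{-1}\). *)

theory Defs
  imports "HOL-Analysis.Analysis"
begin

type_synonym cvec = "complex ^ 2"
type_synonym cmat = "complex ^ 2 ^ 2"

definition mat2 :: "complex \<Rightarrow> complex \<Rightarrow> complex \<Rightarrow> complex \<Rightarrow> cmat" where
  "mat2 a b c d = (\<chi> r s. if r = 1 then (if s = 1 then a else b) else (if s = 1 then c else d))"

definition e1 :: cvec where "e1 = axis 1 1"
definition e2 :: cvec where "e2 = axis 2 1"

definition det_cols :: "cvec \<Rightarrow> cvec \<Rightarrow> complex" where
  "det_cols u w = det (\<chi> r s. if s = 1 then u $ r else w $ r)"

definition rowcol :: "cvec \<Rightarrow> cvec \<Rightarrow> complex" where
  "rowcol v u = (\<Sum>k\<in>UNIV. v $ k * u $ k)"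

definition is_cline :: "cvec set \<Rightarrow> bool" where
  "is_cline L \<longleftrightarrow> (\<exists>w. w \<noteq> 0 \<and> L = {c *s w | c. True})"

definition in_SL2 :: "cmat \<Rightarrow> bool" where
  "in_SL2 g \<longleftrightarrow> det g = 1"

text \<open>A crossing is recorded as (positive?, seg 1, seg 2, seg 1', seg 2'):
  segments 1, 2 are the incoming and 1', 2' the outgoing segments.
  At a positive crossing strand 1 is over (1 continues to 1', 2 to 2');
  at a negative crossing strand 2 is over.\<close>
type_synonym 's crossing = "bool \<times> 's \<times> 's \<times> 's \<times> 's"

record ('s, 'r) diagram =
  segs :: "'s set"
  regs :: "'r set"
  top_reg :: 'r
  above :: "'s \<Rightarrow> 'r"
  below :: "'s \<Rightarrow> 'r"
  crossings :: "'s crossing set"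

definition wf_diagram :: "('s, 'r) diagram \<Rightarrow> bool" where
  "wf_diagram D \<longleftrightarrow> finite (segs D) \<and> finite (regs D) \<and> top_reg D \<in> regs D \<and>
     (\<forall>i\<in>segs D. above D i \<in> regs D \<and> below D i \<in> regs D) \<and>
     (\<forall>(s, i1, i2, o1, o2)\<in>crossings D. i1 \<in> segs D \<and> i2 \<in> segs D \<and> o1 \<in> segs D \<and> o2 \<in> segs D)"

definition decorated_shadow_coloring ::
  "('s, 'r) diagram \<Rightarrow> ('s \<Rightarrow> cmat) \<Rightarrow> ('s \<Rightarrow> cvec set) \<Rightarrow> ('r \<Rightarrow> cvec) \<Rightarrow> bool" where
  "decorated_shadow_coloring D g L u \<longleftrightarrow>
     (\<forall>i\<in>segs D. in_SL2 (g i) \<and> is_cline (L i) \<and> (\<lambda>x. x v* g i) ` L i = L i) \<and>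
     (\<forall>(pos, i1, i2, o1, o2)\<in>crossings D.
        (pos \<longrightarrow> g o1 = g i1 \<and> g o2 = matrix_inv (g i1) ** g i2 ** g i1 \<and>
                 L o1 = L i1 \<and> L o2 = (\<lambda>x. x v* g i1) ` L i2) \<and>
        (\<not> pos \<longrightarrow> g o2 = g i2 \<and> g o1 = g i2 ** g i1 ** matrix_inv (g i2) \<and>
                 L o2 = L i2 \<and> L o1 = (\<lambda>x. x v* g i2) ` L i1)) \<and>
     (\<forall>j\<in>regs D. u j \<noteq> 0) \<and>
     (\<forall>i\<in>segs D. u (below D i) = g i *v u (above D i))"

definition admissible :: "('s, 'r) diagram \<Rightarrow> ('r \<Rightarrow> cvec) \<Rightarrow> ('s \<Rightarrow> cvec) \<Rightarrow> bool" where
  "admissible D u v \<longleftrightarrow>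
     (\<forall>j\<in>regs D. det_cols (u j) e2 \<noteq> 0) \<and>
     (\<forall>i\<in>segs D. rowcol (v i) e2 \<noteq> 0 \<and> rowcol (v i) (u (above D i)) \<noteq> 0)"

definition oct_color ::
  "('s, 'r) diagram \<Rightarrow> ('r \<Rightarrow> cvec) \<Rightarrow> ('s \<Rightarrow> cvec) \<Rightarrow> ('s \<Rightarrow> complex) \<Rightarrow> 's \<Rightarrow> complex \<times> complex \<times> complex" where
  "oct_color D u v m i =
     (det_cols (u (below D i)) e2 / det_cols (u (above D i)) e2,
      - rowcol (v i) e2 / rowcol (v i) (u (above D i)),
      m i)"

definition chi_up :: "complex \<times> complex \<times> complex \<Rightarrow> cmat" where
  "chi_up c = (case c of (a, b, m) \<Rightarrow> mat2 a 0 ((a - 1 / m) / b) 1)"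

definition chi_down :: "complex \<times> complex \<times> complex \<Rightarrow> cmat" where
  "chi_down c = (case c of (a, b, m) \<Rightarrow> mat2 1 ((a - m) * b) 0 a)"

definition vec_up :: "cvec \<Rightarrow> cmat" where
  "vec_up w = mat2 (w $ 1) 0 (w $ 2) 1"

text \<open>An over path in the fundamental groupoid: a word in the generators \<open>x_k^+\<close>
  and their inverses. A step (k, True) is \<open>x_k^+\<close> (from \<open>\<up>k\<close> to \<open>\<down>k\<close>),
  a step (k, False) is \<open>(x_k^+)^{-1}\<close> (from \<open>\<down>k\<close> to \<open>\<up>k\<close>).\<close>
fun over_path :: "('s, 'r) diagram \<Rightarrow> 'r \<Rightarrow> ('s \<times> bool) list \<Rightarrow> 'r \<Rightarrow> bool" where
  "over_path D r [] r' \<longleftrightarrow> r = r'"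
| "over_path D r ((k, True) # p) r' \<longleftrightarrow>
     k \<in> segs D \<and> above D k = r \<and> over_path D (below D k) p r'"
| "over_path D r ((k, False) # p) r' \<longleftrightarrow>
     k \<in> segs D \<and> below D k = r \<and> over_path D (above D k) p r'"

text \<open>Holonomy functor on a word of over-crossing generators
  (composition of paths left to right is sent to matrix product left to right).\<close>
fun Hol_over :: "('s \<Rightarrow> complex \<times> complex \<times> complex) \<Rightarrow> ('s \<times> bool) list \<Rightarrow> cmat" where
  "Hol_over col [] = mat 1"
| "Hol_over col ((k, True) # p) = chi_up (col k) ** Hol_over col p"
| "Hol_over col ((k, False) # p) = matrix_inv (chi_up (col k)) ** Hol_over col p"

text \<open>\<open>hol_{\<chi>,u0}(w_i)\<close>, computed via \<open>F(w_i) = s x_i^+ (x_i^-)^{-1} s^{-1}\<close>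
  where s is the over path (given as a word) from the top region to \<open>\<up>i\<close>.\<close>
definition hol_w :: "('s \<Rightarrow> complex \<times> complex \<times> complex) \<Rightarrow> cvec \<Rightarrow> ('s \<times> bool) list \<Rightarrow> 's \<Rightarrow> cmat" where
  "hol_w col u0 s i =
     vec_up u0 ** (Hol_over col s ** chi_up (col i) ** matrix_inv (chi_down (col i))
                   ** matrix_inv (Hol_over col s)) ** matrix_inv (vec_up u0)"

end

theory Submission imports Defs begin

lemma mat2_nth[simp]: "mat2 a b c d $ 1 $ 1 = a" "mat2 a b c d $ 1 $ 2 = b"
  "mat2 a b c d $ 2 $ 1 = c" "mat2 a b c d $ 2 $ 2 = d"
  by (simp_all add: mat2_def)

lemma mat2_eta: "(A::cmat) = mat2 (A$1$1) (A$1$2) (A$2$1) (A$2$2)"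
  by (simp add: vec_eq_iff forall_2)

lemma mat2_eq_iff: "mat2 a b c d = mat2 a' b' c' d' \<longleftrightarrow> a = a' \<and> b = b' \<and> c = c' \<and> d = d'"
  by (auto simp add: vec_eq_iff forall_2)

lemma mat2_mult: "mat2 a b c d ** mat2 a' b' c' d' = mat2 (a*a'+b*c') (a*b'+b*d') (c*a'+d*c') (c*b'+d*d')"
  by (simp add: vec_eq_iff forall_2 matrix_matrix_mult_def sum_2)

lemma mat2_one: "(mat 1 :: cmat) = mat2 1 0 0 1"
  by (simp add: vec_eq_iff forall_2 mat_def)

lemma det_mat2: "det (mat2 a b c d) = a*d - b*c"
  by (simp add: det_2)

lemma matrix_inv_eq:
  fixes A B :: cmat
  assumes "A ** B = mat 1" "B ** A = mat 1"
  shows "matrix_inv A = B"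
proof -
  have ex: "\<exists>A'::cmat. A ** A' = mat 1 \<and> A' ** A = mat 1" using assms by blast
  define C where "C = matrix_inv A"
  have C: "A ** C = mat 1 \<and> C ** A = mat 1" unfolding C_def matrix_inv_def by (rule someI_ex[OF ex])
  have "C = C ** (A ** B)" using assms by (simp add: matrix_mul_rid)
  also have "\<dots> = (C ** A) ** B" by (simp add: matrix_mul_assoc)
  also have "\<dots> = B" using C by (simp add: matrix_mul_lid)
  finally show ?thesis by (simp add: C_def)
qed

lemma inv_mat2: "a*d - b*c \<noteq> 0 \<Longrightarrow>
  matrix_inv (mat2 a b c d) = mat2 (d/(a*d-b*c)) (-b/(a*d-b*c)) (-c/(a*d-b*c)) (a/(a*d-b*c))"
proof (rule matrix_inv_eq)
  assume h: "a*d - b*c \<noteq> 0"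
  show "mat2 a b c d ** mat2 (d/(a*d-b*c)) (-b/(a*d-b*c)) (-c/(a*d-b*c)) (a/(a*d-b*c)) = mat 1"
    using h by (simp add: mat2_mult mat2_one mat2_eq_iff times_divide_eq_right add_divide_distrib[symmetric] diff_divide_distrib[symmetric] algebra_simps)
  show "mat2 (d/(a*d-b*c)) (-b/(a*d-b*c)) (-c/(a*d-b*c)) (a/(a*d-b*c)) ** mat2 a b c d = mat 1"
    using h by (simp add: mat2_mult mat2_one mat2_eq_iff times_divide_eq_left add_divide_distrib[symmetric] diff_divide_distrib[symmetric] algebra_simps)
qed

lemma rowcol2: "rowcol v w = v$1 * w$1 + v$2 * w$2"
  by (simp add: rowcol_def sum_2)

lemma detcols2: "det_cols w e2 = w$1"
  by (simp add: det_cols_def det_2 e2_def axis_def)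

lemma e2_nth[simp]: "e2$1 = 0" "e2$2 = 1" by (simp_all add: e2_def axis_def)

lemma mv2: "(A::cmat) *v w = (\<chi> r. if r = 1 then A$1$1 * w$1 + A$1$2*w$2 else A$2$1 * w$1 + A$2$2*w$2)"
  by (simp add: vec_eq_iff forall_2 matrix_vector_mult_def sum_2)

lemma vm2: "w v* (A::cmat) = (\<chi> r. if r = 1 then w$1 * A$1$1 + w$2*A$2$1 else w$1 * A$1$2 + w$2*A$2$2)"
  by (simp add: vec_eq_iff forall_2 vector_matrix_mult_def sum_2)

lemma alg_up:
  fixes p1 p2 q1 q2 g11 g12 g21 g22 v1 v2 m :: complex
  assumes q1: "q1 = g11*p1+g12*p2" and q2: "q2 = g21*p1+g22*p2"
    and e1: "v1*g11 + v2*g21 = v1/m" and e2: "v1*g12 + v2*g22 = v2/m"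
    and p1: "p1 \<noteq> 0" and v2: "v2 \<noteq> 0" and S: "v1*p1+v2*p2 \<noteq> 0" and m: "m \<noteq> 0"
  shows "p2 * (q1/p1) + (q1/p1 - 1/m) / (- v2/(v1*p1+v2*p2)) = q2"
proof -
  have e1': "m*(v1*g11 + v2*g21) = v1" using e1 m by (simp add: field_simps)
  have e2': "m*(v1*g12 + v2*g22) = v2" using e2 m by (simp add: field_simps)
  have "m*(v1*q1 + v2*q2) = p1*(m*(v1*g11 + v2*g21)) + p2*(m*(v1*g12 + v2*g22))" unfolding q1 q2 by (simp add: algebra_simps)
  also have "\<dots> = v1*p1+v2*p2" unfolding e1' e2' by (simp add: algebra_simps)
  finally have "m*(v1*q1 + v2*q2) = v1*p1+v2*p2" .
  then show ?thesis using p1 v2 S m by (simp add: field_simps) algebra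
qed

lemma gen_id: "(p::complex) \<noteq> 0 \<Longrightarrow> t \<noteq> 0 \<Longrightarrow> x * ((x / p - m) * (- w / t)) + g * (x / p) = (x / p) * (g - (x - m * p) * w / t)"
  by (simp add: field_simps)

lemma gen_id2: "(p::complex) \<noteq> 0 \<Longrightarrow> t \<noteq> 0 \<Longrightarrow> y * ((x / p - m) * (- w / t)) + g * (x / p) = (g * x - y * ((x - m * p) * w / t)) / p"
  by (simp add: field_simps)

lemma alg_down:
  fixes p1 p2 q1 q2 g11 g12 g21 g22 v1 v2 m :: complex
  assumes q1: "q1 = g11*p1+g12*p2" and q2: "q2 = g21*p1+g22*p2"
    and e1: "v1*g11 + v2*g21 = v1/m" and e2: "v1*g12 + v2*g22 = v2/m"
    and det: "g11*g22 - g12*g21 = 1"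
    and p1: "p1 \<noteq> 0" and v2: "v2 \<noteq> 0" and S: "v1*p1+v2*p2 \<noteq> 0" and m: "m \<noteq> 0"
  shows "q1 * ((q1/p1 - m) * (- v2/(v1*p1+v2*p2))) + g12 * (q1/p1) = 0"
    and "q2 * ((q1/p1 - m) * (- v2/(v1*p1+v2*p2))) + g22 * (q1/p1) = 1"
proof -
  have e1': "m*(v1*g11 + v2*g21) = v1" using e1 m by (simp add: field_simps)
  have e2': "m*(v1*g12 + v2*g22) = v2" using e2 m by (simp add: field_simps)
  have "m * v2 = m * v2 * (g11*g22 - g12*g21)" using det by simp
  also have "\<dots> = g11*(m*(v1*g12 + v2*g22)) - g12*(m*(v1*g11 + v2*g21))" by (simp add: algebra_simps)
  also have "\<dots> = v2*g11 - v1*g12" unfolding e1' e2' by (simp add: algebra_simps)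
  finally have k1: "v2*g11 - v1*g12 = m * v2" by simp
  have "m * v1 = m * v1 * (g11*g22 - g12*g21)" using det by simp
  also have "\<dots> = g22*(m*(v1*g11 + v2*g21)) - g21*(m*(v1*g12 + v2*g22))" by (simp add: algebra_simps)
  also have "\<dots> = v1*g22 - v2*g21" unfolding e1' e2' by (simp add: algebra_simps)
  finally have k2: "v1*g22 - v2*g21 = m * v1" by simp
  have "(q1 - m*p1) * v2 = p1*(v2*g11 - m * v2) + g12*p2* v2" unfolding q1 by (simp add: algebra_simps)
  also have "\<dots> = g12*(v1*p1+v2*p2)" unfolding k1[symmetric] by (simp add: algebra_simps)
  finally have h: "(q1 - m*p1) * v2 = g12*(v1*p1+v2*p2)" .
  have "q1 * ((q1/p1 - m) * (- v2/(v1*p1+v2*p2))) + g12 * (q1/p1)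
     = (q1/p1) * (g12 - (q1 - m*p1) * v2/(v1*p1+v2*p2))" using p1 S by (rule gen_id)
  also have "\<dots> = 0" unfolding h using S by simp
  finally show "q1 * ((q1/p1 - m) * (- v2/(v1*p1+v2*p2))) + g12 * (q1/p1) = 0" .
  have h2: "(q1 - m*p1) * v2 / (v1*p1+v2*p2) = g12" unfolding h using S by simp
  have "q2 * ((q1/p1 - m) * (- v2/(v1*p1+v2*p2))) + g22 * (q1/p1) = (g22 * q1 - q2 * g12) / p1"
    by (subst gen_id2[OF p1 S]) (simp only: h2)
  also have "g22 * q1 - q2 * g12 = p1 * (g11*g22 - g12*g21)" unfolding q1 q2 by (simp add: algebra_simps)
  finally show "q2 * ((q1/p1 - m) * (- v2/(v1*p1+v2*p2))) + g22 * (q1/p1) = 1"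
    using det p1 by simp
qed

lemma inv_props:
  fixes A :: cmat
  assumes "det A \<noteq> 0"
  shows "A ** matrix_inv A = mat 1" "matrix_inv A ** A = mat 1"
proof -
  have ex: "\<exists>A'::cmat. A ** A' = mat 1 \<and> A' ** A = mat 1"
    using assms invertible_det_nz[of A] unfolding invertible_def by blast
  have "A ** matrix_inv A = mat 1 \<and> matrix_inv A ** A = mat 1"
    unfolding matrix_inv_def by (rule someI_ex[OF ex])
  then show "A ** matrix_inv A = mat 1" "matrix_inv A ** A = mat 1" by auto
qed

lemma det_vec_up: "det (vec_up w) = w$1"
  by (simp add: vec_up_def det_mat2)

lemma path_hol:
  assumes key: "\<forall>k\<in>segs D. vec_up (u (above D k)) ** chi_up (col k) = vec_up (u (below D k))
                 \<and> det (chi_up (col k)) \<noteq> 0"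
  shows "over_path D r s r' \<Longrightarrow> vec_up (u r) ** Hol_over col s = vec_up (u r')"
proof (induction s arbitrary: r)
  case Nil
  then show ?case by (simp add: matrix_mul_rid)
next
  case (Cons kb p)
  obtain k b where kb: "kb = (k, b)" by force
  show ?case
  proof (cases b)
    case True
    with Cons.prems kb have k: "k \<in> segs D" "above D k = r" "over_path D (below D k) p r'" by auto
    have "vec_up (u r) ** Hol_over col (kb # p) = (vec_up (u (above D k)) ** chi_up (col k)) ** Hol_over col p"
      using kb True k by (simp add: matrix_mul_assoc)
    also have "\<dots> = vec_up (u (below D k)) ** Hol_over col p" using key k(1) by simp
    also have "\<dots> = vec_up (u r')" using Cons.IH k by simp
    finally show ?thesis .
  next
    case False
    with Cons.prems kb have k: "k \<in> segs D" "below D k = r" "over_path D (above D k) p r'" by auto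
    have "vec_up (u (below D k)) ** matrix_inv (chi_up (col k))
        = vec_up (u (above D k)) ** (chi_up (col k) ** matrix_inv (chi_up (col k)))"
      using key k(1) by (simp add: matrix_mul_assoc)
    also have "\<dots> = vec_up (u (above D k))" using key k(1) inv_props by (simp add: matrix_mul_rid)
    finally have e: "vec_up (u (below D k)) ** matrix_inv (chi_up (col k)) = vec_up (u (above D k))" .
    have "vec_up (u r) ** Hol_over col (kb # p) = (vec_up (u (below D k)) ** matrix_inv (chi_up (col k))) ** Hol_over col p"
      using kb False k by (simp add: matrix_mul_assoc)
    also have "\<dots> = vec_up (u (above D k)) ** Hol_over col p" using e by simp
    also have "\<dots> = vec_up (u r')" using Cons.IH k by simp
    finally show ?thesis .
  qed
qed

lemma seg_facts:
  fixes D :: "('s, 'r) diagram"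
    and g :: "'s \<Rightarrow> cmat" and L :: "'s \<Rightarrow> cvec set" and u :: "'r \<Rightarrow> cvec"
    and v :: "'s \<Rightarrow> cvec" and m :: "'s \<Rightarrow> complex"
  assumes wf: "wf_diagram D"
    and dsc: "decorated_shadow_coloring D g L u"
    and vv: "\<forall>i\<in>segs D. v i \<in> L i \<and> v i \<noteq> 0 \<and> v i v* g i = (1 / m i) *s v i"
    and adm: "admissible D u v"
    and k: "k \<in> segs D"
  shows "vec_up (u (above D k)) ** chi_up (oct_color D u v m k) = vec_up (u (below D k))"
    and "det (chi_up (oct_color D u v m k)) \<noteq> 0"
    and "g k ** vec_up (u (above D k)) ** chi_down (oct_color D u v m k) = vec_up (u (below D k))"
    and "det (chi_down (oct_color D u v m k)) \<noteq> 0"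
proof -
  define p1 where "p1 = u (above D k) $ 1"
  define p2 where "p2 = u (above D k) $ 2"
  define q1 where "q1 = u (below D k) $ 1"
  define q2 where "q2 = u (below D k) $ 2"
  define g11 where "g11 = g k $ 1 $ 1"
  define g12 where "g12 = g k $ 1 $ 2"
  define g21 where "g21 = g k $ 2 $ 1"
  define g22 where "g22 = g k $ 2 $ 2"
  define v1 where "v1 = v k $ 1"
  define v2 where "v2 = v k $ 2"
  define mm where "mm = m k"
  have regs: "above D k \<in> regs D" "below D k \<in> regs D" using wf k unfolding wf_diagram_def by auto
  have p1: "p1 \<noteq> 0" and q1nz: "q1 \<noteq> 0" using adm regs unfolding admissible_def p1_def q1_def detcols2 by auto
  have v2: "v2 \<noteq> 0" and S: "v1*p1+v2*p2 \<noteq> 0" using adm k unfolding admissible_def v1_def v2_def p1_def p2_def rowcol2 by auto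
  have ud: "u (below D k) = g k *v u (above D k)" using dsc k unfolding decorated_shadow_coloring_def by auto
  have q1: "q1 = g11*p1+g12*p2" and q2: "q2 = g21*p1+g22*p2"
    unfolding q1_def q2_def ud p1_def p2_def g11_def g12_def g21_def g22_def by (simp_all add: mv2)
  have ev: "v k v* g k = (1 / m k) *s v k" using vv k by auto
  have e1: "v1*g11 + v2*g21 = v1/mm" and e2: "v1*g12 + v2*g22 = v2/mm"
    using arg_cong[OF ev, of "\<lambda>x. x$1"] arg_cong[OF ev, of "\<lambda>x. x$2"]
    unfolding v1_def v2_def g11_def g12_def g21_def g22_def mm_def by (simp_all add: vm2)
  have det: "g11*g22 - g12*g21 = 1" using dsc k unfolding decorated_shadow_coloring_def in_SL2_def
    g11_def g12_def g21_def g22_def det_2 by auto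
  have m: "mm \<noteq> 0"
  proof
    assume "mm = 0"
    then have "v1*g11 + v2*g21 = 0" "v1*g12 + v2*g22 = 0" using e1 e2 by simp_all
    have "v2 * (g11*g22 - g12*g21) = g11*(v1*g12 + v2*g22) - g12*(v1*g11 + v2*g21)" by (simp add: algebra_simps)
    with det \<open>v1*g11 + v2*g21 = 0\<close> \<open>v1*g12 + v2*g22 = 0\<close> have "v2 = 0" by simp
    with v2 show False by simp
  qed
  have col: "oct_color D u v m k = (q1/p1, - v2/(v1*p1+v2*p2), mm)"
    unfolding oct_color_def detcols2 rowcol2 p1_def p2_def q1_def v1_def v2_def mm_def by simp
  have vp: "vec_up (u (above D k)) = mat2 p1 0 p2 1" unfolding vec_up_def p1_def p2_def ..
  have vq: "vec_up (u (below D k)) = mat2 q1 0 q2 1" unfolding vec_up_def q1_def q2_def ..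
  have gk: "g k = mat2 g11 g12 g21 g22" unfolding g11_def g12_def g21_def g22_def by (rule mat2_eta)
  show "vec_up (u (above D k)) ** chi_up (oct_color D u v m k) = vec_up (u (below D k))"
    unfolding vp vq col chi_up_def using alg_up[OF q1 q2 e1 e2 p1 v2 S m] p1
    by (simp add: mat2_mult mat2_eq_iff)
  show "det (chi_up (oct_color D u v m k)) \<noteq> 0"
    unfolding col chi_up_def using p1 q1nz by (simp add: det_mat2)
  show "g k ** vec_up (u (above D k)) ** chi_down (oct_color D u v m k) = vec_up (u (below D k))"
    unfolding vp vq col chi_down_def gk using alg_down[OF q1 q2 e1 e2 det p1 v2 S m] q1 q2
    by (simp add: mat2_mult mat2_eq_iff)
  show "det (chi_down (oct_color D u v m k)) \<noteq> 0"
    unfolding col chi_down_def using p1 q1nz by (simp add: det_mat2)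
qed

theorem theoremA:
  fixes D :: "('s, 'r) diagram"
    and g :: "'s \<Rightarrow> cmat" and L :: "'s \<Rightarrow> cvec set" and u :: "'r \<Rightarrow> cvec"
    and v :: "'s \<Rightarrow> cvec" and m :: "'s \<Rightarrow> complex"
  assumes "wf_diagram D"
    and "decorated_shadow_coloring D g L u"
    and "\<forall>i\<in>segs D. v i \<in> L i \<and> v i \<noteq> 0 \<and> v i v* g i = (1 / m i) *s v i"
    and "admissible D u v"
    and "i \<in> segs D"
    and "over_path D (top_reg D) s (above D i)"
  shows "hol_w (oct_color D u v m) (u (top_reg D)) s i = g i"
proof -
  note sf = seg_facts[OF assms(1-4)]
  define col where "col = oct_color D u v m"
  define V0 where "V0 = vec_up (u (top_reg D))"
  define H where "H = Hol_over col s"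
  define X where "X = vec_up (u (above D i))"
  define Y where "Y = vec_up (u (below D i))"
  define C where "C = chi_up (col i)"
  define Dn where "Dn = chi_down (col i)"
  have VH: "V0 ** H = X" unfolding V0_def H_def X_def
    by (rule path_hol[OF _ assms(6)]) (use sf(1,2) col_def in auto)
  have regs: "above D i \<in> regs D" "top_reg D \<in> regs D" using assms(1,5) unfolding wf_diagram_def by auto
  have dX: "det X \<noteq> 0" using assms(4) regs unfolding X_def det_vec_up admissible_def detcols2 by auto
  have dV: "det V0 \<noteq> 0" using assms(4) regs unfolding V0_def det_vec_up admissible_def detcols2 by auto
  have dH: "det H \<noteq> 0" using dX VH det_mul[of V0 H] by auto
  have XC: "X ** C = Y" unfolding X_def C_def Y_def col_def using sf(1)[OF assms(5)] .
  have gXD: "g i ** X ** Dn = Y" unfolding X_def Dn_def Y_def col_def using sf(3)[OF assms(5)] .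
  have dD: "det Dn \<noteq> 0" unfolding Dn_def col_def using sf(4)[OF assms(5)] .
  have invX: "matrix_inv H ** matrix_inv V0 = matrix_inv X"
  proof (rule matrix_inv_eq[symmetric])
    show "X ** (matrix_inv H ** matrix_inv V0) = mat 1"
      unfolding VH[symmetric]
      by (simp add: matrix_mul_assoc[symmetric]) (simp add: matrix_mul_assoc inv_props dH dV matrix_mul_lid matrix_mul_rid)
    show "matrix_inv H ** matrix_inv V0 ** X = mat 1"
      unfolding VH[symmetric]
      by (simp add: matrix_mul_assoc[symmetric]) (simp add: matrix_mul_assoc inv_props dH dV matrix_mul_lid matrix_mul_rid)
  qed
  have "hol_w col (u (top_reg D)) s i = (V0 ** H) ** C ** matrix_inv Dn ** (matrix_inv H ** matrix_inv V0)"
    unfolding hol_w_def V0_def[symmetric] H_def[symmetric] C_def[symmetric] Dn_def[symmetric]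
    by (simp add: matrix_mul_assoc)
  also have "\<dots> = Y ** matrix_inv Dn ** matrix_inv X" unfolding VH invX XC ..
  also have "\<dots> = g i ** X ** (Dn ** matrix_inv Dn) ** matrix_inv X" unfolding gXD[symmetric] by (simp add: matrix_mul_assoc)
  also have "\<dots> = g i ** (X ** matrix_inv X)" using dD by (simp add: inv_props matrix_mul_rid matrix_mul_assoc)
  also have "\<dots> = g i" using dX by (simp add: inv_props matrix_mul_rid)
  finally show ?thesis unfolding col_def .
qed

end
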